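(* Let $A\in\mathbb{R}^{d\times d}$ be symmetric positive definite and $p\ge1$. Let $(M,N)$, $E_p$, the process ${\mathbf z}^k$, ${\mathbf x}^k=E_p^\top{\mathbf z}^k$, $C_i$ and $\bar N$ be as follows: $N$ is a random $d\times d$ matrix, $M$ is a random $pd\times pd$ block companion matrix (block rows $i=1,\dots,p-1$ have $I_d$ in block column $i+1$, last block row random $(C^{\mathrm r}_0,\dots,C^{\mathrm r}_{p-1})$), $E_p=(0_d,\dots,0_d,I_d)^\top$, ${\mathbf z}^0=E_p{\mathbf x}^0$, ${\mathbf z}^k=M^{(k)}{\mathbf z}^{k-1}+E_pN^{(k)}{\mathbf b}$ with $(M^{(k)},N^{(k)})$ i.i.d. copies of $(M,N)$, $C_i=\mathbb{E}[C_i^{\mathrm r}]$, $\bar N=\mathbb{E}[N]$. Assume $\rho(\mathbb{E}[M])<1$, that $\mathbb{E}[{\mathbf x}^k]\to-A^{-1}{\mathbf b}$ for every ${\mathbf b}$ and every ${\mathbf x}^0$, and that there is an invertible $Q\in\mathbb{R}^{d\times d}$ with each $Q^{-1}C_iQ$ upper triangular. Then there exist monic polynomials $s_1,\dots,s_d$ of degree $p$ such that $$\det(\mathbb{E}[M]-\lambda I_{pd})=(-1)^{pd}\prod_{j=1}^d s_j(\lambda)\quad\text{and}\quad \operatorname{spec}(-\bar NA)=\{s_1(1),\dots,s_d(1)\}.$$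
   Context: $\rho$ denotes spectral radius and $\operatorname{spec}$ the set of eigenvalues. This setting is what the paper calls a $p$-CLI optimization algorithm applied to the quadratic $f({\mathbf x})=\tfrac12{\mathbf x}^\top A{\mathbf x}+{\mathbf b}^\top{\mathbf x}$. *)

theory Defs
  imports "HOL-Probability.Probability" "Jordan_Normal_Form.Spectral_Radius"
    "Jordan_Normal_Form.Gauss_Jordan_Elimination"
begin

definition blk_companion :: "nat \<Rightarrow> nat \<Rightarrow> (nat \<Rightarrow> real mat) \<Rightarrow> real mat" where
  "blk_companion d p C = mat (p*d) (p*d) (\<lambda>(r,c).
     if r < (p-1)*d then (if c = r + d then 1 else 0)
     else C (c div d) $$ (r - (p-1)*d, c mod d))"

definition Ep :: "nat \<Rightarrow> nat \<Rightarrow> real mat" where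
  "Ep d p = mat (p*d) d (\<lambda>(r,c). if r = (p-1)*d + c then 1 else 0)"

primrec zproc :: "nat \<Rightarrow> nat \<Rightarrow> (nat \<Rightarrow> nat \<Rightarrow> 'w \<Rightarrow> real mat) \<Rightarrow> (nat \<Rightarrow> 'w \<Rightarrow> real mat)
    \<Rightarrow> real vec \<Rightarrow> real vec \<Rightarrow> nat \<Rightarrow> 'w \<Rightarrow> real vec" where
  "zproc d p Cr Nr b x0 0 \<omega> = Ep d p *\<^sub>v x0"
| "zproc d p Cr Nr b x0 (Suc k) \<omega> =
     blk_companion d p (\<lambda>i. Cr (Suc k) i \<omega>) *\<^sub>v zproc d p Cr Nr b x0 k \<omega>
     + Ep d p *\<^sub>v (Nr (Suc k) \<omega> *\<^sub>v b)"

definition mean_mat :: "'w measure \<Rightarrow> nat \<Rightarrow> nat \<Rightarrow> ('w \<Rightarrow> real mat) \<Rightarrow> real mat" where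
  "mean_mat P n m X = mat n m (\<lambda>(a,b). LINT \<omega>|P. X \<omega> $$ (a,b))"

text \<open>All random entries of the k-th copy (C^r_0,...,C^r_{p-1}, N), packed as one
  random element of a product space (entries outside the index ranges set to 0).\<close>
definition copy_data :: "nat \<Rightarrow> nat \<Rightarrow> (nat \<Rightarrow> 'w \<Rightarrow> real mat) \<Rightarrow> ('w \<Rightarrow> real mat)
    \<Rightarrow> 'w \<Rightarrow> (nat option \<times> nat \<times> nat \<Rightarrow> real)" where
  "copy_data d p C N \<omega> = (\<lambda>(oi,a,b). if a < d \<and> b < d then
      (case oi of Some i \<Rightarrow> if i < p then C i \<omega> $$ (a,b) else 0 | None \<Rightarrow> N \<omega> $$ (a,b)) else 0)"

definition data_space :: "(nat option \<times> nat \<times> nat \<Rightarrow> real) measure" where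
  "data_space = PiM UNIV (\<lambda>_. borel)"

definition sym_pos_def :: "nat \<Rightarrow> real mat \<Rightarrow> bool" where
  "sym_pos_def d A \<longleftrightarrow> A \<in> carrier_mat d d \<and> transpose_mat A = A \<and>
     (\<forall>v \<in> carrier_vec d. v \<noteq> 0\<^sub>v d \<longrightarrow> v \<bullet> (A *\<^sub>v v) > 0)"

end

theory Submission
  imports Defs
begin

lemma sum_pd: "(\<Sum>k<p*d. f k) = (\<Sum>i<p. \<Sum>b<d. f (i*d+b))" for f :: "nat \<Rightarrow> 'a::comm_monoid_add"
proof (induction p)
  case 0 show ?case by simp
next
  case (Suc p)
  have u: "{..<Suc p * d} = {..<p*d} \<union> {p*d..<p*d+d}" by auto
  have "(\<Sum>k<Suc p*d. f k) = (\<Sum>k<p*d. f k) + (\<Sum>k\<in>{p*d..<p*d+d}. f k)"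
    unfolding u by (rule sum.union_disjoint) auto
  also have "(\<Sum>k\<in>{p*d..<p*d+d}. f k) = (\<Sum>b<d. f (p*d+b))"
    using sum.shift_bounds_nat_ivl[of f 0 "p*d" d] by (simp add: atLeast0LessThan add.commute)
  finally show ?case using Suc by (simp add: add.commute)
qed

lemma mult_entry: "A \<in> carrier_mat n m \<Longrightarrow> B \<in> carrier_mat m l \<Longrightarrow> i < n \<Longrightarrow> j < l \<Longrightarrow>
  (A * B) $$ (i,j) = (\<Sum>k<m. A $$ (i,k) * B $$ (k,j))"
  by (auto simp: scalar_prod_def atLeast0LessThan intro!: sum.cong)

lemma mult_vec_entry: "A \<in> carrier_mat n m \<Longrightarrow> v \<in> carrier_vec m \<Longrightarrow> i < n \<Longrightarrow>
  (A *\<^sub>v v) $ i = (\<Sum>k<m. A $$ (i,k) * v $ k)"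
  by (auto simp: scalar_prod_def atLeast0LessThan intro!: sum.cong)

lemma blk_carrier[simp]: "blk_companion d p C \<in> carrier_mat (p*d) (p*d)"
  by (simp add: blk_companion_def)

lemma blk_entry: "r < p*d \<Longrightarrow> c < p*d \<Longrightarrow> blk_companion d p C $$ (r,c) =
   (if r < (p-1)*d then (if c = r + d then 1 else 0)
     else C (c div d) $$ (r - (p-1)*d, c mod d))"
  by (simp add: blk_companion_def)

primrec lcomb :: "nat \<Rightarrow> nat \<Rightarrow> (nat \<Rightarrow> 'a::comm_ring_1 mat) \<Rightarrow> 'a \<Rightarrow> 'a mat" where
  "lcomb d 0 X t = 0\<^sub>m d d"
| "lcomb d (Suc n) X t = lcomb d n X t + t^n \<cdot>\<^sub>m X n"

lemma lcomb_carrier: "(\<And>i. i < n \<Longrightarrow> X i \<in> carrier_mat d d) \<Longrightarrow> lcomb d n X t \<in> carrier_mat d d"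
  by (induction n) auto

lemma lcomb_entry: "(\<And>i. i < n \<Longrightarrow> X i \<in> carrier_mat d d) \<Longrightarrow> a < d \<Longrightarrow> b < d \<Longrightarrow>
   lcomb d n X t $$ (a,b) = (\<Sum>i<n. X i $$ (a,b) * t^i)"
proof (induction n)
  case 0 then show ?case by simp
next
  case (Suc n)
  have c: "lcomb d n X t \<in> carrier_mat d d" using Suc.prems by (intro lcomb_carrier) auto
  have Xn: "X n \<in> carrier_mat d d" using Suc.prems by auto
  have "lcomb d n X t $$ (a, b) = (\<Sum>i<n. X i $$ (a,b) * t^i)" using Suc by auto
  moreover have "(lcomb d n X t + t ^ n \<cdot>\<^sub>m X n) $$ (a, b) = lcomb d n X t $$ (a, b) + (t ^ n \<cdot>\<^sub>m X n) $$ (a, b)"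
    using Xn Suc.prems by (intro index_add_mat) auto
  moreover have "(t ^ n \<cdot>\<^sub>m X n) $$ (a, b) = t^n * X n $$ (a,b)" using Xn Suc.prems(2,3) by simp
  ultimately show ?case by (simp add: mult.commute)
qed

lemma lcomb_cong: "(\<And>i. i < n \<Longrightarrow> X i = Y i) \<Longrightarrow> lcomb d n X t = lcomb d n Y t"
  by (induction n) auto

lemma lcomb_sim: assumes Q: "Q \<in> carrier_mat d d" and Qi: "Qi \<in> carrier_mat d d"
  and X: "\<And>i. i < n \<Longrightarrow> X i \<in> carrier_mat d d"
  shows "lcomb d n (\<lambda>i. Q * X i * Qi) t = Q * lcomb d n X t * Qi"
  using X
proof (induction n)
  case 0 then show ?case using Q Qi by simp
next
  case (Suc n)
  have c: "lcomb d n X t \<in> carrier_mat d d" using Suc.prems by (intro lcomb_carrier) auto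
  have Xn: "X n \<in> carrier_mat d d" using Suc.prems by auto
  have "Q * (lcomb d n X t + t ^ n \<cdot>\<^sub>m X n) * Qi = Q * lcomb d n X t * Qi + Q * (t ^ n \<cdot>\<^sub>m X n) * Qi"
  proof -
    have "Q * (lcomb d n X t + t ^ n \<cdot>\<^sub>m X n) = Q * lcomb d n X t + Q * (t ^ n \<cdot>\<^sub>m X n)"
      using Q c Xn by (intro mult_add_distrib_mat) auto
    moreover have "(Q * lcomb d n X t + Q * (t ^ n \<cdot>\<^sub>m X n)) * Qi = Q * lcomb d n X t * Qi + Q * (t ^ n \<cdot>\<^sub>m X n) * Qi"
      using Q c Xn Qi by (intro add_mult_distrib_mat) auto
    ultimately show ?thesis by simp
  qed
  also have "Q * (t ^ n \<cdot>\<^sub>m X n) * Qi = t^n \<cdot>\<^sub>m (Q * X n * Qi)"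
  proof -
    have "Q * (t ^ n \<cdot>\<^sub>m X n) = t^n \<cdot>\<^sub>m (Q * X n)" using Q Xn by (intro mult_smult_distrib) auto
    moreover have "t^n \<cdot>\<^sub>m (Q * X n) * Qi = t^n \<cdot>\<^sub>m (Q * X n * Qi)" using Q Xn Qi by (intro mult_smult_assoc_mat) auto
    ultimately show ?thesis by simp
  qed
  finally show ?case using Suc by simp
qed

lemma same_mod_le: "(k::nat) mod d = c mod d \<Longrightarrow> k div d \<le> c div d \<Longrightarrow> k \<le> c"
  by (metis add_le_cancel_right div_mult_mod_eq mult_le_mono1)

lemma same_mod_eq: "(k::nat) mod d = c mod d \<Longrightarrow> k div d = c div d \<Longrightarrow> k = c"
  by (metis div_mult_mod_eq)

lemma det_blk_nonzero:
  fixes C :: "nat \<Rightarrow> real mat" and t :: real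
  assumes C: "\<And>i. i<p \<Longrightarrow> C i \<in> carrier_mat d d" and p: "p \<ge> 1" and t: "t \<noteq> 0"
  shows "det (blk_companion d p C - t \<cdot>\<^sub>m 1\<^sub>m (p*d)) = (-1)^((p-1)*d) * det (lcomb d p C t - t^p \<cdot>\<^sub>m 1\<^sub>m d)"
proof -
  define n where "n = p*d"
  define q where "q = (p-1)*d"
  have nq: "n = q + d" using p unfolding n_def q_def by (cases p) auto
  define K where "K = blk_companion d p C - t \<cdot>\<^sub>m 1\<^sub>m n"
  have K: "K \<in> carrier_mat n n" unfolding K_def n_def by (intro minus_carrier_mat) auto
  have Kent: "K$$(r,k) = (if r < q then (if k = r+d then 1 else 0) else C (k div d) $$ (r - q, k mod d)) - (if r = k then t else 0)"
    if "r<n" "k<n" for r k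
    using that unfolding K_def n_def q_def by (simp add: blk_entry)
  define e where "e = (\<lambda>k c. if k mod d = c mod d \<and> k div d \<le> c div d then (1/t)^(c div d - k div d) else (0::real))"
  define E where "E = mat n n (\<lambda>(k,c). e k c)"
  have E: "E \<in> carrier_mat n n" unfolding E_def by simp
  have Eut: "upper_triangular E"
    unfolding upper_triangular_def E_def e_def using same_mod_le by fastforce
  have "diag_mat E = map (\<lambda>_. 1) [0..<n]"
    unfolding diag_mat_def E_def e_def by simp
  then have detE: "det E = 1"
    using det_upper_triangular[OF Eut E] by (simp add: map_replicate_const)
  have ediff: "e (r+d) c - t * e r c = (if r = c then -t else 0)" if "d > 0" for r c
  proof -
    have m: "(r+d) mod d = r mod d" "(r+d) div d = Suc (r div d)" using that by auto
    show ?thesis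
    proof (cases "r mod d = c mod d")
      case False then show ?thesis unfolding e_def m by auto
    next
      case True
      show ?thesis
      proof (cases "Suc (r div d) \<le> c div d")
        case True
        then have "c div d - r div d = Suc (c div d - Suc (r div d))" by auto
        then have "t * (1/t)^(c div d - r div d) = (1/t)^(c div d - Suc (r div d))" using t by simp
        moreover have "r \<noteq> c" using True by auto
        ultimately show ?thesis unfolding e_def m using \<open>r mod d = c mod d\<close> True by auto
      next
        case False
        show ?thesis
        proof (cases "r div d = c div d")
          case True
          then have "r = c" using same_mod_eq \<open>r mod d = c mod d\<close> by blast
          then show ?thesis unfolding e_def m by auto
        next
          case False
          then have "r \<noteq> c" by auto
          then show ?thesis unfolding e_def m using False \<open>\<not> Suc (r div d) \<le> c div d\<close> by auto
        qed
      qed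
    qed
  qed
  define D where "D = mat d d (\<lambda>(a,b). \<Sum>i<p. C i $$ (a,b) * (1/t)^(p-1-i)) - t \<cdot>\<^sub>m 1\<^sub>m d"
  define W where "W = mat d q (\<lambda>(a,c). (K*E) $$ (q + a, c))"
  have KEent: "(K*E)$$(r,c) = (\<Sum>k<n. K$$(r,k) * e k c)" if "r < n" "c < n" for r c
    using mult_entry[OF K E that] that unfolding E_def by simp
  have KE: "K * E = four_block_mat ((-t) \<cdot>\<^sub>m 1\<^sub>m q) (0\<^sub>m q d) W D"
  proof (rule eq_matI)
    show "dim_row (K * E) = dim_row (four_block_mat ((-t) \<cdot>\<^sub>m 1\<^sub>m q) (0\<^sub>m q d) W D)"
      using K nq unfolding D_def by simp
    show "dim_col (K * E) = dim_col (four_block_mat ((-t) \<cdot>\<^sub>m 1\<^sub>m q) (0\<^sub>m q d) W D)"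
      using E nq unfolding D_def by simp
    fix r c assume "r < dim_row (four_block_mat ((-t) \<cdot>\<^sub>m 1\<^sub>m q) (0\<^sub>m q d) W D)"
      "c < dim_col (four_block_mat ((-t) \<cdot>\<^sub>m 1\<^sub>m q) (0\<^sub>m q d) W D)"
    then have r: "r < n" and c: "c < n" using nq unfolding D_def by auto
    show "(K*E)$$(r,c) = four_block_mat ((-t) \<cdot>\<^sub>m 1\<^sub>m q) (0\<^sub>m q d) W D $$ (r,c)"
    proof (cases "r < q")
      case True
      then have d0: "d > 0" using q_def by (cases d) auto
      have rd: "r + d < n" using True nq by simp
      have "(K*E)$$(r,c) = (\<Sum>k<n. (if k = r+d then e k c else 0) - (if k = r then t * e k c else 0))"
        unfolding KEent[OF r c] using True r by (intro sum.cong) (auto simp: Kent left_diff_distrib)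
      also have "\<dots> = (\<Sum>k<n. (if k = r+d then e k c else 0)) - (\<Sum>k<n. (if k = r then t * e k c else 0))"
        by (rule sum_subtractf)
      also have "\<dots> = e (r+d) c - t * e r c" using rd r by simp
      also have "\<dots> = (if r = c then -t else 0)" using ediff d0 by simp
      finally show ?thesis using True r c nq unfolding D_def by auto
    next
      case False
      define a where "a = r - q"
      have ra: "r = q + a" "a < d" using False r nq unfolding a_def by auto
      show ?thesis
      proof (cases "c < q")
        case True
        then show ?thesis using ra False unfolding W_def D_def by auto
      next
        case False
        define b where "b = c - q"
        have cb: "c = q + b" "b < d" using False c nq unfolding b_def by auto
        have "(K*E)$$(r,c) = (\<Sum>k<n. C (k div d) $$ (a, k mod d) * e k c - (if k = r then t * e k c else 0))"
          unfolding KEent[OF r c] using ra r by (intro sum.cong) (auto simp: Kent left_diff_distrib)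
        also have "\<dots> = (\<Sum>k<n. C (k div d) $$ (a, k mod d) * e k c) - t * e r c"
          using r by (simp add: sum_subtractf)
        also have "(\<Sum>k<n. C (k div d) $$ (a, k mod d) * e k c) = (\<Sum>i<p. \<Sum>b'<d. C i $$ (a, b') * e (i*d+b') c)"
          unfolding n_def sum_pd using cb by (intro sum.cong refl) auto
        also have "\<dots> = (\<Sum>i<p. C i $$ (a, b) * (1/t)^(p-1-i))"
        proof (intro sum.cong refl)
          fix i assume i: "i \<in> {..<p}"
          have cdiv: "c div d = p - 1" "c mod d = b" using cb unfolding q_def by auto
          have "(\<Sum>b'<d. C i $$ (a, b') * e (i*d+b') c) = (\<Sum>b'<d. if b' = b then C i $$ (a, b) * (1/t)^(p-1-i) else 0)"
            using i cb(2) by (intro sum.cong refl) (auto simp: e_def cdiv)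
          also have "\<dots> = C i $$ (a, b) * (1/t)^(p-1-i)" using cb(2) by simp
          finally show "(\<Sum>b'<d. C i $$ (a, b') * e (i*d+b') c) = C i $$ (a, b) * (1/t)^(p-1-i)" .
        qed
        also have "e r c = (if a = b then 1 else 0)"
          using ra cb unfolding e_def q_def by auto
        finally show ?thesis using ra cb \<open>\<not> r < q\<close> False unfolding D_def by auto
      qed
    qed
  qed
  have D: "D \<in> carrier_mat d d" unfolding D_def by (intro minus_carrier_mat) auto
  have W: "W \<in> carrier_mat d q" unfolding W_def by simp
  have "det K = det K * det E" using detE by simp
  also have "\<dots> = det (K * E)" using det_mult[OF K E] by simp
  also have "\<dots> = det ((-t) \<cdot>\<^sub>m 1\<^sub>m q) * det D" unfolding KE
    by (rule det_four_block_mat_upper_right_zero) (use D W in auto)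
  also have "det ((-t) \<cdot>\<^sub>m 1\<^sub>m q) = (-t)^q" by simp
  finally have dK: "det K = (-t)^q * det D" .
  have tD: "t^(p-1) \<cdot>\<^sub>m D = lcomb d p C t - t^p \<cdot>\<^sub>m 1\<^sub>m d"
  proof (rule eq_matI)
    fix a b assume ab: "a < dim_row (lcomb d p C t - t ^ p \<cdot>\<^sub>m 1\<^sub>m d)" "b < dim_col (lcomb d p C t - t ^ p \<cdot>\<^sub>m 1\<^sub>m d)"
    then have a: "a < d" and b: "b < d" using lcomb_carrier[of p C d t] C by auto
    have pw: "t^(p-1) * (1/t)^(p-1-i) = t^i" if "i < p" for i
    proof -
      have "t^(p-1) = t^i * t^(p-1-i)" using that by (simp flip: power_add)
      then show ?thesis using t by (simp add: power_one_over)
    qed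
    have pw2: "t^(p-1) * t = t^p" using p by (cases p) auto
    have "(t^(p-1) \<cdot>\<^sub>m D) $$ (a,b) = t^(p-1) * ((\<Sum>i<p. C i $$ (a,b) * (1/t)^(p-1-i)) - (if a = b then t else 0))"
      using a b unfolding D_def by simp
    also have "\<dots> = (\<Sum>i<p. C i $$ (a,b) * (t^(p-1) * (1/t)^(p-1-i))) - (if a = b then t^p else 0)"
      using pw2 by (simp add: right_diff_distrib sum_distrib_left ac_simps)
    also have "\<dots> = (\<Sum>i<p. C i $$ (a,b) * t^i) - (if a = b then t^p else 0)"
      using pw by simp
    also have "\<dots> = (lcomb d p C t - t ^ p \<cdot>\<^sub>m 1\<^sub>m d) $$ (a,b)"
      using a b lcomb_carrier[of p C d t] C by (simp add: lcomb_entry)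
    finally show "(t^(p-1) \<cdot>\<^sub>m D) $$ (a,b) = (lcomb d p C t - t ^ p \<cdot>\<^sub>m 1\<^sub>m d) $$ (a,b)" .
  qed (use lcomb_carrier[of p C d t] C D in auto)
  have "det (t^(p-1) \<cdot>\<^sub>m D) = (t^(p-1))^d * det D" using D by simp
  also have "(t^(p-1))^d = t^q" unfolding q_def by (simp add: power_mult)
  finally have "det (lcomb d p C t - t^p \<cdot>\<^sub>m 1\<^sub>m d) = t^q * det D" unfolding tD by simp
  moreover have "(-t)^q = (-1)^q * t^q" by (rule power_minus)
  ultimately show ?thesis using dK unfolding K_def n_def q_def by simp
qed

lemma prod_list_map_upt: "prod_list (map f [0..<n]) = (\<Prod>i<n. f i)"
  by (induction n) (auto simp: lessThan_Suc mult.commute)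

lemma partA:
  fixes C :: "nat \<Rightarrow> real mat" and Nb A Q Qi :: "real mat"
  assumes C: "\<And>i. i<p \<Longrightarrow> C i \<in> carrier_mat d d" and p: "p \<ge> 1"
    and Q: "Q \<in> carrier_mat d d" and Qi: "Qi \<in> carrier_mat d d"
    and QQi: "Q * Qi = 1\<^sub>m d" and QiQ: "Qi * Q = 1\<^sub>m d"
    and ut: "\<forall>i<p. upper_triangular (Qi * C i * Q)"
    and NA: "- (Nb * A) = 1\<^sub>m d - lcomb d p C 1"
  shows "\<exists>s :: nat \<Rightarrow> real poly.
           (\<forall>j < d. lead_coeff (s j) = 1 \<and> degree (s j) = p) \<and>
           (\<forall>t::real. det (blk_companion d p C - t \<cdot>\<^sub>m 1\<^sub>m (p*d))
                     = (-1)^(p*d) * (\<Prod>j<d. poly (s j) t)) \<and>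
           spectrum (map_mat complex_of_real (- (Nb * A)))
             = {complex_of_real (poly (s j) 1) | j. j < d}"
proof -
  define T where "T = (\<lambda>i. Qi * C i * Q)"
  have T: "T i \<in> carrier_mat d d" if "i < p" for i using C[OF that] Q Qi unfolding T_def by auto
  have CT: "C i = Q * T i * Qi" if "i < p" for i
  proof -
    have "Q * T i * Qi = (Q * Qi) * C i * (Q * Qi)" unfolding T_def
      using C[OF that] Q Qi by (simp add: assoc_mult_mat[of _ d d _ d _ d])
    then show ?thesis using QQi C[OF that] by simp
  qed
  define X where "X = (\<lambda>j. \<Sum>i<p. monom (T i $$ (j,j)) i)"
  define s where "s = (\<lambda>j. monom 1 p + - X j)"
  have degX: "degree (X j) < p" for j
  proof -
    have "degree (X j) \<le> p - 1" unfolding X_def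
      by (rule degree_sum_le) (auto simp: degree_monom_le intro: order.trans[OF degree_monom_le])
    then show ?thesis using p by linarith
  qed
  have degs: "degree (s j) = p" for j
    unfolding s_def using degX[of j] by (subst degree_add_eq_left) (auto simp: degree_monom_eq)
  have lcs: "lead_coeff (s j) = 1" for j
    unfolding degs using degX[of j] unfolding s_def by (simp add: coeff_eq_0)
  have polys: "poly (s j) t = t^p - (\<Sum>i<p. T i $$ (j,j) * t^i)" for j t
    unfolding s_def X_def by (simp add: poly_sum poly_monom)
  define Y where "Y = (\<lambda>t::real. lcomb d p T t - t^p \<cdot>\<^sub>m 1\<^sub>m d)"
  have Y: "Y t \<in> carrier_mat d d" for t unfolding Y_def using lcomb_carrier[of p T d t] T
    by (intro minus_carrier_mat) auto
  have Yent: "Y t $$ (a,b) = (\<Sum>i<p. T i $$ (a,b) * t^i) - (if a = b then t^p else 0)" if "a < d" "b < d" for a b t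
    unfolding Y_def using that lcomb_carrier[of p T d t] T by (simp add: lcomb_entry)
  have Yut: "upper_triangular (Y t)" for t
    unfolding upper_triangular_def
  proof (intro allI impI)
    fix a b assume a: "a < dim_row (Y t)" and b: "b < a"
    have "T i $$ (a,b) = 0" if "i < p" for i using ut that a b Y[of t] T[OF that]
      unfolding T_def upper_triangular_def by auto
    then show "Y t $$ (a,b) = 0" using a b Y[of t] by (simp add: Yent)
  qed
  have detY: "det (Y t) = (-1)^d * (\<Prod>j<d. poly (s j) t)" for t
  proof -
    have "det (Y t) = (\<Prod>j<d. Y t $$ (j,j))"
      using det_upper_triangular[OF Yut Y] Y[of t] by (simp add: diag_mat_def prod_list_map_upt)
    also have "\<dots> = (\<Prod>j<d. (-1) * poly (s j) t)"
      by (intro prod.cong refl) (auto simp: Yent polys)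
    also have "\<dots> = (\<Prod>j<d. (-1::real)) * (\<Prod>j<d. poly (s j) t)" by (rule prod.distrib)
    also have "\<dots> = (-1)^d * (\<Prod>j<d. poly (s j) t)" by simp
    finally show ?thesis .
  qed
  have LY: "lcomb d p C t - t^p \<cdot>\<^sub>m 1\<^sub>m d = Q * Y t * Qi" for t
  proof -
    have L: "lcomb d p C t = Q * lcomb d p T t * Qi"
      using lcomb_cong[of p C "\<lambda>i. Q * T i * Qi" d t] CT lcomb_sim[OF Q Qi, of p T t] T by auto
    have I: "t^p \<cdot>\<^sub>m 1\<^sub>m d = Q * (t^p \<cdot>\<^sub>m 1\<^sub>m d) * Qi"
    proof -
      have "Q * (t^p \<cdot>\<^sub>m 1\<^sub>m d) = t^p \<cdot>\<^sub>m (Q * 1\<^sub>m d)" using Q by (intro mult_smult_distrib) auto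
      also have "\<dots> = t^p \<cdot>\<^sub>m Q" using Q by simp
      finally have "Q * (t^p \<cdot>\<^sub>m 1\<^sub>m d) * Qi = t^p \<cdot>\<^sub>m Q * Qi" by simp
      also have "\<dots> = t^p \<cdot>\<^sub>m (Q * Qi)" using Q Qi by (intro mult_smult_assoc_mat) auto
      finally show ?thesis using QQi by simp
    qed
    have lT: "lcomb d p T t \<in> carrier_mat d d" using lcomb_carrier[of p T d t] T by auto
    have "Q * Y t * Qi = Q * lcomb d p T t * Qi - Q * (t^p \<cdot>\<^sub>m 1\<^sub>m d) * Qi"
      unfolding Y_def using Q Qi lT
      by (simp add: mult_minus_distrib_mat[of Q d d] minus_mult_distrib_mat[of _ d d _ Qi d])
    then show ?thesis using L I by simp
  qed
  have detsim: "det (Q * Z * Qi) = det Z" if Z: "Z \<in> carrier_mat d d" for Z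
  proof -
    have "det (Q * Z * Qi) = det Q * det Z * det Qi" using Q Z Qi by (simp add: det_mult[of _ d])
    also have "det Q * det Qi = 1" using det_mult[OF Q Qi] QQi by simp
    ultimately show ?thesis by (simp add: ac_simps)
  qed
  define M where "M = blk_companion d p C"
  define n where "n = p * d"
  have M: "M \<in> carrier_mat n n" unfolding M_def n_def by simp
  have nz: "det (M - t \<cdot>\<^sub>m 1\<^sub>m n) = (-1)^n * (\<Prod>j<d. poly (s j) t)" if t: "t \<noteq> 0" for t
  proof -
    have "det (M - t \<cdot>\<^sub>m 1\<^sub>m n) = (-1)^((p-1)*d) * det (Y t)"
      using det_blk_nonzero[OF C p t] LY[of t] detsim[OF Y] unfolding M_def n_def by simp
    also have "\<dots> = (-1)^((p-1)*d + d) * (\<Prod>j<d. poly (s j) t)" unfolding detY by (simp add: power_add)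
    also have "(p-1)*d + d = n" unfolding n_def using p by (cases p) auto
    finally show ?thesis .
  qed
  have cp: "det (M - t \<cdot>\<^sub>m 1\<^sub>m n) = (-1)^n * poly (char_poly M) t" for t
  proof -
    have "- char_matrix M t = (-1) \<cdot>\<^sub>m (M - t \<cdot>\<^sub>m 1\<^sub>m n)"
      using M unfolding char_matrix_def by (intro eq_matI) auto
    then have "poly (char_poly M) t = (-1)^n * det (M - t \<cdot>\<^sub>m 1\<^sub>m n)"
      unfolding char_poly_matrix[OF M] using M by simp
    then show ?thesis by simp
  qed
  have peq: "char_poly M = (\<Prod>j<d. s j)"
  proof (rule ccontr)
    assume ne: "char_poly M \<noteq> (\<Prod>j<d. s j)"
    then have "finite {x. poly (char_poly M - (\<Prod>j<d. s j)) x = 0}" by (intro poly_roots_finite) auto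
    moreover have "UNIV - {0::real} \<subseteq> {x. poly (char_poly M - (\<Prod>j<d. s j)) x = 0}"
      using nz cp by (auto simp: poly_prod)
    ultimately have "finite (UNIV - {0::real})" by (rule finite_subset[rotated])
    then show False using infinite_UNIV_char_0[where 'a=real] by simp
  qed
  have detall: "det (M - t \<cdot>\<^sub>m 1\<^sub>m n) = (-1)^n * (\<Prod>j<d. poly (s j) t)" for t
    unfolding cp peq by (simp add: poly_prod)
  define U where "U = 1\<^sub>m d - lcomb d p T 1"
  have lT1: "lcomb d p T 1 \<in> carrier_mat d d" using lcomb_carrier[of p T d 1] T by auto
  have U: "U \<in> carrier_mat d d" unfolding U_def by (intro minus_carrier_mat) (use lT1 in auto)
  have Uent: "U $$ (a,b) = (if a = b then 1 else 0) - (\<Sum>i<p. T i $$ (a,b))" if "a < d" "b < d" for a b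
    unfolding U_def using that lT1 T by (simp add: lcomb_entry)
  have Uut: "upper_triangular U" unfolding upper_triangular_def
  proof (intro allI impI)
    fix a b assume a: "a < dim_row U" and b: "b < a"
    have "T i $$ (a,b) = 0" if "i < p" for i using ut that a b U T[OF that]
      unfolding T_def upper_triangular_def by auto
    then show "U $$ (a,b) = 0" using a b U by (simp add: Uent)
  qed
  have NAU: "- (Nb * A) = Q * U * Qi"
  proof -
    have "Q * U = Q * 1\<^sub>m d - Q * lcomb d p T 1"
      unfolding U_def using Q lT1 by (intro mult_minus_distrib_mat) auto
    then have "Q * U = Q - Q * lcomb d p T 1" using Q by simp
    then have "Q * U * Qi = (Q - Q * lcomb d p T 1) * Qi" by simp
    also have "\<dots> = Q * Qi - Q * lcomb d p T 1 * Qi"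
      using Q lT1 Qi by (intro minus_mult_distrib_mat) auto
    finally have "Q * U * Qi = Q * Qi - Q * lcomb d p T 1 * Qi" .
    also have "Q * lcomb d p T 1 * Qi = lcomb d p C 1"
      using lcomb_cong[of p C "\<lambda>i. Q * T i * Qi" d 1] CT lcomb_sim[OF Q Qi, of p T 1] T by auto
    finally show ?thesis unfolding NA QQi by simp
  qed
  let ?h = "map_mat complex_of_real"
  have hU: "?h U \<in> carrier_mat d d" using U by simp
  have sim: "similar_mat (?h (- (Nb * A))) (?h U)"
  proof (rule similar_matI)
    show "{?h (- (Nb * A)), ?h U, ?h Q, ?h Qi} \<subseteq> carrier_mat d d" unfolding NAU using Q Qi U by auto
    show "?h Q * ?h Qi = 1\<^sub>m d" using QQi of_real_hom.mat_hom_mult[OF Q Qi, symmetric] by (simp add: of_real_hom.mat_hom_one)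
    show "?h Qi * ?h Q = 1\<^sub>m d" using QiQ of_real_hom.mat_hom_mult[OF Qi Q, symmetric] by (simp add: of_real_hom.mat_hom_one)
    have "?h (Q * U * Qi) = ?h (Q * U) * ?h Qi"
      using Q U Qi by (intro of_real_hom.mat_hom_mult[of "Q*U" d d Qi d]) auto
    also have "?h (Q * U) = ?h Q * ?h U" using Q U by (rule of_real_hom.mat_hom_mult)
    finally show "?h (- (Nb * A)) = ?h Q * ?h U * ?h Qi" unfolding NAU .
  qed
  have hNA: "?h (- (Nb * A)) \<in> carrier_mat d d" unfolding NAU using Q U Qi by simp
  have hUut: "upper_triangular (?h U)" using Uut U unfolding upper_triangular_def by auto
  have "spectrum (?h (- (Nb * A))) = {k. poly (char_poly (?h U)) k = 0}"
    unfolding spectrum_root_char_poly[OF hNA] char_poly_similar[OF sim] ..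
  also have "\<dots> = {k. \<exists>j<d. k = complex_of_real (U $$ (j,j))}"
    unfolding char_poly_upper_triangular[OF hU hUut] poly_prod_list
    using U by (auto simp: prod_list_zero_iff diag_mat_def)
  also have "\<dots> = {complex_of_real (poly (s j) 1) | j. j < d}"
    using Uent polys by auto
  finally have spec: "spectrum (?h (- (Nb * A))) = {complex_of_real (poly (s j) 1) | j. j < d}" .
  show ?thesis
    by (rule exI[of _ s]) (use lcs degs detall spec in \<open>auto simp: M_def n_def\<close>)
qed

type_synonym dat = "nat option \<times> nat \<times> nat \<Rightarrow> real"

definition CMd :: "nat \<Rightarrow> dat \<Rightarrow> nat \<Rightarrow> real mat" where
  "CMd d x i = mat d d (\<lambda>(a,b). x (Some i, a, b))"
definition NMd :: "nat \<Rightarrow> dat \<Rightarrow> real mat" where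
  "NMd d x = mat d d (\<lambda>(a,b). x (None, a, b))"

primrec zd :: "nat \<Rightarrow> nat \<Rightarrow> real vec \<Rightarrow> real vec \<Rightarrow> nat \<Rightarrow> (nat \<Rightarrow> dat) \<Rightarrow> real vec" where
  "zd d p b x0 0 f = Ep d p *\<^sub>v x0"
| "zd d p b x0 (Suc k) f = blk_companion d p (CMd d (f (Suc k))) *\<^sub>v zd d p b x0 k f
     + Ep d p *\<^sub>v (NMd d (f (Suc k)) *\<^sub>v b)"

lemma Ep_carrier[simp]: "Ep d p \<in> carrier_mat (p*d) d" by (simp add: Ep_def)

lemma zd_dim: "dim_vec (zd d p b x0 k f) = p*d"
  by (induction k) (simp_all add: Ep_def blk_companion_def)

lemma zd_carrier: "zd d p b x0 k f \<in> carrier_vec (p*d)"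
  using zd_dim unfolding carrier_vec_def by simp

lemma zd_cong: "(\<And>i. i \<in> {1..k} \<Longrightarrow> f i = g i) \<Longrightarrow> zd d p b x0 k f = zd d p b x0 k g"
  by (induction k) simp_all

lemma Ep_vec_entry: assumes w: "w \<in> carrier_vec d" and r: "r < p*d"
  shows "(Ep d p *\<^sub>v w) $ r = (if (p-1)*d \<le> r then w $ (r - (p-1)*d) else 0)"
proof -
  have p: "p \<ge> 1" using r by (cases p) auto
  have "(Ep d p *\<^sub>v w) $ r = (\<Sum>c<d. (if r = (p-1)*d + c then 1 else 0) * w $ c)"
    using mult_vec_entry[OF Ep_carrier w r] r by (simp add: Ep_def)
  also have "\<dots> = (\<Sum>c<d. if c = r - (p-1)*d \<and> (p-1)*d \<le> r then w $ c else 0)"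
    by (intro sum.cong refl) auto
  also have "\<dots> = (if (p-1)*d \<le> r then w $ (r - (p-1)*d) else 0)"
  proof (cases "(p-1)*d \<le> r")
    case True
    have "r - (p-1)*d < d" using r p True by (cases p) auto
    then show ?thesis using True by simp
  qed simp
  finally show ?thesis .
qed

lemma NMd_vec_entry: "b \<in> carrier_vec d \<Longrightarrow> a < d \<Longrightarrow> (NMd d x *\<^sub>v b) $ a = (\<Sum>j<d. x (None, a, j) * b $ j)"
  by (subst mult_vec_entry[of _ d d]) (auto simp: NMd_def)

lemma zd_Suc_entry: assumes b: "b \<in> carrier_vec d" and r: "r < p*d"
  shows "zd d p b x0 (Suc k) f $ r = (if r < (p-1)*d then zd d p b x0 k f $ (r+d)
     else (\<Sum>c<p*d. f (Suc k) (Some (c div d), r-(p-1)*d, c mod d) * zd d p b x0 k f $ c)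
        + (\<Sum>j<d. f (Suc k) (None, r-(p-1)*d, j) * b $ j))"
proof -
  have p: "p \<ge> 1" and d: "d > 0" using r by (cases p; cases d; auto)+
  define z where "z = zd d p b x0 k f"
  have z: "z \<in> carrier_vec (p*d)" unfolding z_def by (rule zd_carrier)
  have Nb: "NMd d (f (Suc k)) *\<^sub>v b \<in> carrier_vec d" using b by (intro mult_mat_vec_carrier) (auto simp: NMd_def)
  have "zd d p b x0 (Suc k) f $ r = (blk_companion d p (CMd d (f (Suc k))) *\<^sub>v z) $ r
     + (Ep d p *\<^sub>v (NMd d (f (Suc k)) *\<^sub>v b)) $ r"
    using r unfolding z_def by (subst zd.simps, subst index_add_vec(1)) (auto simp: Ep_def)
  also have "(blk_companion d p (CMd d (f (Suc k))) *\<^sub>v z) $ r =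
     (\<Sum>c<p*d. blk_companion d p (CMd d (f (Suc k))) $$ (r,c) * z $ c)"
    by (rule mult_vec_entry[OF blk_carrier z r])
  also have "\<dots> = (if r < (p-1)*d then z $ (r+d)
     else (\<Sum>c<p*d. f (Suc k) (Some (c div d), r-(p-1)*d, c mod d) * z $ c))"
  proof (cases "r < (p-1)*d")
    case True
    have rd: "r + d < p*d" using True p by (cases p) auto
    have "(\<Sum>c<p*d. blk_companion d p (CMd d (f (Suc k))) $$ (r,c) * z $ c) = (\<Sum>c<p*d. if c = r + d then z $ c else 0)"
      using True r by (intro sum.cong refl) (auto simp: blk_entry)
    then show ?thesis using True rd by simp
  next
    case False
    have "r - (p-1)*d < d" using r p False by (cases p) auto
    then have "(\<Sum>c<p*d. blk_companion d p (CMd d (f (Suc k))) $$ (r,c) * z $ c) =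
      (\<Sum>c<p*d. f (Suc k) (Some (c div d), r-(p-1)*d, c mod d) * z $ c)"
      using False r d by (intro sum.cong refl) (auto simp: blk_entry CMd_def)
    then show ?thesis using False by simp
  qed
  also have "(Ep d p *\<^sub>v (NMd d (f (Suc k)) *\<^sub>v b)) $ r = (if (p-1)*d \<le> r then (\<Sum>j<d. f (Suc k) (None, r-(p-1)*d, j) * b $ j) else 0)"
  proof -
    have "r - (p-1)*d < d" if "(p-1)*d \<le> r" using r p that by (cases p) auto
    then show ?thesis using Ep_vec_entry[OF Nb r] NMd_vec_entry[OF b] by auto
  qed
  finally show ?thesis unfolding z_def by auto
qed

lemma comp_meas: "j \<in> K \<Longrightarrow> (\<lambda>f. f j x) \<in> borel_measurable (PiM K (\<lambda>_. data_space))"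
proof -
  assume j: "j \<in> K"
  have "(\<lambda>f. f j) \<in> PiM K (\<lambda>_. data_space) \<rightarrow>\<^sub>M data_space" by (rule measurable_component_singleton) (rule j)
  moreover have "(\<lambda>g. g x) \<in> data_space \<rightarrow>\<^sub>M borel" unfolding data_space_def by (rule measurable_component_singleton) simp
  ultimately show ?thesis by (rule measurable_compose)
qed


lemma zd_meas: assumes "{1..k} \<subseteq> K" "r < p*d" "b \<in> carrier_vec d"
  shows "(\<lambda>f. zd d p b x0 k f $ r) \<in> borel_measurable (PiM K (\<lambda>_. data_space))"
  using assms
proof (induction k arbitrary: r)
  case 0 then show ?case by simp
next
  case (Suc k)
  have K: "{1..k} \<subseteq> K" "Suc k \<in> K" using Suc.prems by auto
  have eq: "(\<lambda>f. zd d p b x0 (Suc k) f $ r) = (\<lambda>f. (if r < (p-1)*d then zd d p b x0 k f $ (r+d)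
     else (\<Sum>c<p*d. f (Suc k) (Some (c div d), r-(p-1)*d, c mod d) * zd d p b x0 k f $ c)
        + (\<Sum>j<d. f (Suc k) (None, r-(p-1)*d, j) * b $ j)))"
    using zd_Suc_entry[OF Suc.prems(3,2)] by auto
  show ?case
  proof (cases "r < (p-1)*d")
    case True
    have "r + d < p*d" using True by (cases p) auto
    then show ?thesis unfolding eq using True Suc.IH[OF K(1)] Suc.prems by simp
  next
    case False
    show ?thesis unfolding eq using False
      by (simp, intro borel_measurable_add borel_measurable_sum borel_measurable_times
          comp_meas[OF K(2)] Suc.IH[OF K(1)] borel_measurable_const) (auto simp: Suc.prems)
  qed
qed

lemma partB:
  fixes P :: "'w measure" and Cr :: "nat \<Rightarrow> nat \<Rightarrow> 'w \<Rightarrow> real mat" and Nr :: "nat \<Rightarrow> 'w \<Rightarrow> real mat"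
  assumes PS: "prob_space P"
    and Cc: "\<And>k i \<omega>. Cr k i \<omega> \<in> carrier_mat d d"
    and Nc: "\<And>k \<omega>. Nr k \<omega> \<in> carrier_mat d d"
    and Ci: "\<And>k i a b. i < p \<Longrightarrow> a < d \<Longrightarrow> b < d \<Longrightarrow> integrable P (\<lambda>\<omega>. Cr k i \<omega> $$ (a,b))"
    and Ni: "\<And>k a b. a < d \<Longrightarrow> b < d \<Longrightarrow> integrable P (\<lambda>\<omega>. Nr k \<omega> $$ (a,b))"
    and meas: "\<And>k. copy_data d p (Cr k) (Nr k) \<in> measurable P data_space"
    and ind: "prob_space.indep_vars P (\<lambda>_. data_space) (\<lambda>k. copy_data d p (Cr k) (Nr k)) {1..}"
    and dis: "\<And>k. k \<ge> 1 \<Longrightarrow> distr P data_space (copy_data d p (Cr k) (Nr k))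
                        = distr P data_space (copy_data d p (Cr 0) (Nr 0))"
    and b: "b \<in> carrier_vec d" and p: "p \<ge> 1"
  shows "(\<forall>k \<omega>. zproc d p Cr Nr b xi k \<omega> \<in> carrier_vec (p*d)) \<and> (\<forall>k r. r < p*d \<longrightarrow> integrable P (\<lambda>\<omega>. zproc d p Cr Nr b xi k \<omega> $ r)) \<and>
         (\<forall>k r. r < (p-1)*d \<longrightarrow> (LINT \<omega>|P. zproc d p Cr Nr b xi (Suc k) \<omega> $ r) = (LINT \<omega>|P. zproc d p Cr Nr b xi k \<omega> $ (r+d))) \<and>
         (\<forall>k a. a < d \<longrightarrow> (LINT \<omega>|P. zproc d p Cr Nr b xi (Suc k) \<omega> $ ((p-1)*d + a)) =
            (\<Sum>c<p*d. mean_mat P d d (Cr 0 (c div d)) $$ (a, c mod d) * (LINT \<omega>|P. zproc d p Cr Nr b xi k \<omega> $ c))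
            + (\<Sum>j<d. mean_mat P d d (Nr 0) $$ (a,j) * b $ j))"
proof -
  interpret prob_space P by (rule PS)
  define cp where "cp = (\<lambda>k. copy_data d p (Cr k) (Nr k))"
  define z where "z = (\<lambda>k \<omega>. zproc d p Cr Nr b xi k \<omega>)"
  define q where "q = (p-1)*d"
  have cpC: "cp k \<omega> (Some i, a, c) = Cr k i \<omega> $$ (a,c)" if "i<p" "a<d" "c<d" for k \<omega> i a c
    using that unfolding cp_def copy_data_def by simp
  have cpN: "cp k \<omega> (None, a, c) = Nr k \<omega> $$ (a,c)" if "a<d" "c<d" for k \<omega> a c
    using that unfolding cp_def copy_data_def by simp
  have zz: "z k \<omega> = zd d p b xi k (\<lambda>i. cp i \<omega>)" for k \<omega>
  proof (induction k)
    case 0 then show ?case by (simp add: z_def)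
  next
    case (Suc k)
    have B: "blk_companion d p (\<lambda>i. Cr (Suc k) i \<omega>) = blk_companion d p (CMd d (cp (Suc k) \<omega>))"
    proof (rule eq_matI)
      fix r c assume r: "r < dim_row (blk_companion d p (CMd d (cp (Suc k) \<omega>)))"
        and c: "c < dim_col (blk_companion d p (CMd d (cp (Suc k) \<omega>)))"
      then have r: "r < p*d" and c: "c < p*d" by (auto simp: blk_companion_def)
      have d: "d > 0" using c by (cases d) auto
      have cd: "c div d < p" using c by (simp add: less_mult_imp_div_less)
      have cm: "c mod d < d" using d by simp
      have rq: "r - (p-1)*d < d" if "\<not> r < (p-1)*d" using r that by (cases p) auto
      show "blk_companion d p (\<lambda>i. Cr (Suc k) i \<omega>) $$ (r,c) = blk_companion d p (CMd d (cp (Suc k) \<omega>)) $$ (r,c)"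
        using r c cd cm rq by (auto simp: blk_entry CMd_def cpC)
    qed (auto simp: blk_companion_def)
    have N: "Nr (Suc k) \<omega> = NMd d (cp (Suc k) \<omega>)"
      by (rule eq_matI) (use Nc[of "Suc k" \<omega>] in \<open>auto simp: NMd_def cpN\<close>)
    show ?case using Suc unfolding z_def by (simp add: B N)
  qed
  have cpm: "(\<lambda>\<omega>. cp k \<omega> x) \<in> borel_measurable P" for k x
  proof -
    have "(\<lambda>g. g x) \<in> data_space \<rightarrow>\<^sub>M borel" unfolding data_space_def by (rule measurable_component_singleton) simp
    with meas[of k] show ?thesis unfolding cp_def by (rule measurable_compose)
  qed
  have cpmean: "(LINT \<omega>|P. cp k \<omega> x) = (LINT \<omega>|P. cp 0 \<omega> x)" if k: "k \<ge> 1" for k x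
  proof -
    have xm: "(\<lambda>g. g x) \<in> borel_measurable data_space" unfolding data_space_def by (rule measurable_component_singleton) simp
    have "(LINT \<omega>|P. cp k \<omega> x) = integral\<^sup>L (distr P data_space (cp k)) (\<lambda>g. g x)"
      using meas[of k] xm unfolding cp_def by (simp add: integral_distr)
    also have "\<dots> = integral\<^sup>L (distr P data_space (cp 0)) (\<lambda>g. g x)" using dis[OF k] unfolding cp_def by simp
    also have "\<dots> = (LINT \<omega>|P. cp 0 \<omega> x)"
      using meas[of 0] xm unfolding cp_def by (simp add: integral_distr)
    finally show ?thesis .
  qed
  have zr: "z k \<omega> $ c = (\<lambda>g. zd d p b xi k g $ c) (restrict (\<lambda>i. cp i \<omega>) {1..k})" for k \<omega> c
    unfolding zz by (subst zd_cong[of k "\<lambda>i. cp i \<omega>" "restrict (\<lambda>i. cp i \<omega>) {1..k}"]) auto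
  have ind': "indep_vars (\<lambda>_. data_space) (\<lambda>k. cp k) {1..}" using ind unfolding cp_def by simp
  have indep: "indep_var borel (\<lambda>\<omega>. cp (Suc k) \<omega> x) borel (\<lambda>\<omega>. z k \<omega> $ c)" if c: "c < p*d" for k x c
  proof -
    have I: "indep_var (PiM {Suc k} (\<lambda>_. data_space)) (\<lambda>\<omega>. restrict (\<lambda>i. cp i \<omega>) {Suc k})
       (PiM {1..k} (\<lambda>_. data_space)) (\<lambda>\<omega>. restrict (\<lambda>i. cp i \<omega>) {1..k})"
      by (rule indep_var_restrict[OF ind']) auto
    have "indep_var borel ((\<lambda>h. h (Suc k) x) \<circ> (\<lambda>\<omega>. restrict (\<lambda>i. cp i \<omega>) {Suc k}))
        borel ((\<lambda>g. zd d p b xi k g $ c) \<circ> (\<lambda>\<omega>. restrict (\<lambda>i. cp i \<omega>) {1..k}))"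
      by (rule indep_var_compose[OF I comp_meas zd_meas]) (use c b in auto)
    moreover have "((\<lambda>h. h (Suc k) x) \<circ> (\<lambda>\<omega>. restrict (\<lambda>i. cp i \<omega>) {Suc k})) = (\<lambda>\<omega>. cp (Suc k) \<omega> x)"
      by (simp add: comp_def)
    moreover have "((\<lambda>g. zd d p b xi k g $ c) \<circ> (\<lambda>\<omega>. restrict (\<lambda>i. cp i \<omega>) {1..k})) = (\<lambda>\<omega>. z k \<omega> $ c)"
      by (simp add: comp_def zr)
    ultimately show ?thesis by simp
  qed
  have zS: "z (Suc k) \<omega> $ r = (if r < q then z k \<omega> $ (r+d) else
      (\<Sum>c<p*d. cp (Suc k) \<omega> (Some (c div d), r-q, c mod d) * z k \<omega> $ c) + (\<Sum>j<d. cp (Suc k) \<omega> (None, r-q, j) * b $ j))"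
    if "r < p*d" for k \<omega> r
    unfolding zz q_def by (rule zd_Suc_entry[OF b that])
  have cpint: "integrable P (\<lambda>\<omega>. cp k \<omega> (Some (c div d), a, c mod d))" if "c < p*d" "a < d" for k c a
  proof -
    have d: "d > 0" using that by (cases d) auto
    have cd: "c div d < p" using that by (simp add: less_mult_imp_div_less)
    show ?thesis using Ci[OF cd that(2), of "c mod d" k] cpC[OF cd that(2)] d by simp
  qed
  have cpintN: "integrable P (\<lambda>\<omega>. cp k \<omega> (None, a, j))" if "j < d" "a < d" for k j a
    using Ni[OF that(2,1), of k] cpN[OF that(2,1)] by simp
  have rq: "r - q < d" if "r < p*d" "\<not> r < q" for r using that unfolding q_def by (cases p) auto
  have zint: "\<forall>r<p*d. integrable P (\<lambda>\<omega>. z k \<omega> $ r)" for k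
  proof (induction k)
    case 0 then show ?case by (simp add: z_def)
  next
    case (Suc k)
    show ?case
    proof (intro allI impI)
      fix r assume r: "r < p*d"
      show "integrable P (\<lambda>\<omega>. z (Suc k) \<omega> $ r)"
      proof (cases "r < q")
        case True
        have "r + d < p*d" using True r unfolding q_def by (cases p) auto
        then show ?thesis using zS[OF r] True Suc by simp
      next
        case False
        have "integrable P (\<lambda>\<omega>. (\<Sum>c<p*d. cp (Suc k) \<omega> (Some (c div d), r-q, c mod d) * z k \<omega> $ c) + (\<Sum>j<d. cp (Suc k) \<omega> (None, r-q, j) * b $ j))"
        proof -
          have i1: "integrable P (\<lambda>\<omega>. cp (Suc k) \<omega> (Some (c div d), r-q, c mod d) * z k \<omega> $ c)" if c: "c < p*d" for c
            by (rule indep_var_integrable[OF indep[OF c] cpint[OF c rq[OF r False]]]) (use Suc c in auto)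
          have i2: "integrable P (\<lambda>\<omega>. cp (Suc k) \<omega> (None, r-q, j) * b $ j)" if j: "j < d" for j
            using cpintN[OF j rq[OF r False]] by simp
          show ?thesis by (intro Bochner_Integration.integrable_add Bochner_Integration.integrable_sum) (use i1 i2 in auto)
        qed
        then show ?thesis using zS[OF r] False by simp
      qed
    qed
  qed
  have shift: "(LINT \<omega>|P. z (Suc k) \<omega> $ r) = (LINT \<omega>|P. z k \<omega> $ (r+d))" if "r < q" for k r
  proof -
    have "r < p*d" using that unfolding q_def by (cases p) auto
    then show ?thesis using zS that by simp
  qed
  have rec: "(LINT \<omega>|P. z (Suc k) \<omega> $ (q + a)) =
            (\<Sum>c<p*d. mean_mat P d d (Cr 0 (c div d)) $$ (a, c mod d) * (LINT \<omega>|P. z k \<omega> $ c))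
            + (\<Sum>j<d. mean_mat P d d (Nr 0) $$ (a,j) * b $ j)" if a: "a < d" for k a
  proof -
    have r: "q + a < p*d" using a p unfolding q_def by (cases p) auto
    have d: "d > 0" using a by auto
    have "(LINT \<omega>|P. z (Suc k) \<omega> $ (q + a)) = (LINT \<omega>|P. (\<Sum>c<p*d. cp (Suc k) \<omega> (Some (c div d), a, c mod d) * z k \<omega> $ c)
        + (\<Sum>j<d. cp (Suc k) \<omega> (None, a, j) * b $ j))"
      using zS[OF r] by simp
    also have "\<dots> = (\<Sum>c<p*d. (LINT \<omega>|P. cp (Suc k) \<omega> (Some (c div d), a, c mod d) * z k \<omega> $ c))
        + (\<Sum>j<d. (LINT \<omega>|P. cp (Suc k) \<omega> (None, a, j) * b $ j))"
    proof -
      have i1: "integrable P (\<lambda>\<omega>. cp (Suc k) \<omega> (Some (c div d), a, c mod d) * z k \<omega> $ c)" if c: "c < p*d" for c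
        by (rule indep_var_integrable[OF indep[OF c] cpint[OF c a]]) (use zint c in auto)
      have i2: "integrable P (\<lambda>\<omega>. cp (Suc k) \<omega> (None, a, j) * b $ j)" if j: "j < d" for j
        using cpintN[OF j a] by simp
      have "(LINT \<omega>|P. (\<Sum>c<p*d. cp (Suc k) \<omega> (Some (c div d), a, c mod d) * z k \<omega> $ c)
        + (\<Sum>j<d. cp (Suc k) \<omega> (None, a, j) * b $ j)) = (LINT \<omega>|P. (\<Sum>c<p*d. cp (Suc k) \<omega> (Some (c div d), a, c mod d) * z k \<omega> $ c))
        + (LINT \<omega>|P. (\<Sum>j<d. cp (Suc k) \<omega> (None, a, j) * b $ j))"
        by (rule Bochner_Integration.integral_add) (use i1 i2 in auto)
      also have "(LINT \<omega>|P. (\<Sum>c<p*d. cp (Suc k) \<omega> (Some (c div d), a, c mod d) * z k \<omega> $ c))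
          = (\<Sum>c<p*d. (LINT \<omega>|P. cp (Suc k) \<omega> (Some (c div d), a, c mod d) * z k \<omega> $ c))"
        by (rule Bochner_Integration.integral_sum) (use i1 in auto)
      also have "(LINT \<omega>|P. (\<Sum>j<d. cp (Suc k) \<omega> (None, a, j) * b $ j)) = (\<Sum>j<d. (LINT \<omega>|P. cp (Suc k) \<omega> (None, a, j) * b $ j))"
        by (rule Bochner_Integration.integral_sum) (use i2 in auto)
      finally show ?thesis .
    qed
    also have "(\<Sum>c<p*d. (LINT \<omega>|P. cp (Suc k) \<omega> (Some (c div d), a, c mod d) * z k \<omega> $ c))
       = (\<Sum>c<p*d. mean_mat P d d (Cr 0 (c div d)) $$ (a, c mod d) * (LINT \<omega>|P. z k \<omega> $ c))"
    proof (intro sum.cong refl)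
      fix c assume c: "c \<in> {..<p*d}"
      have cd: "c div d < p" using c by (simp add: less_mult_imp_div_less)
      have cm: "c mod d < d" using d by simp
      have "(LINT \<omega>|P. cp (Suc k) \<omega> (Some (c div d), a, c mod d) * z k \<omega> $ c)
          = (LINT \<omega>|P. cp (Suc k) \<omega> (Some (c div d), a, c mod d)) * (LINT \<omega>|P. z k \<omega> $ c)"
        using c a zint by (intro indep_var_lebesgue_integral[OF indep] cpint) auto
      also have "(LINT \<omega>|P. cp (Suc k) \<omega> (Some (c div d), a, c mod d)) = (LINT \<omega>|P. cp 0 \<omega> (Some (c div d), a, c mod d))"
        by (rule cpmean) simp
      also have "\<dots> = mean_mat P d d (Cr 0 (c div d)) $$ (a, c mod d)"
        unfolding mean_mat_def using a cm cd by (simp add: cpC)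
      finally show "(LINT \<omega>|P. cp (Suc k) \<omega> (Some (c div d), a, c mod d) * z k \<omega> $ c)
          = mean_mat P d d (Cr 0 (c div d)) $$ (a, c mod d) * (LINT \<omega>|P. z k \<omega> $ c)" .
    qed
    also have "(\<Sum>j<d. (LINT \<omega>|P. cp (Suc k) \<omega> (None, a, j) * b $ j)) = (\<Sum>j<d. mean_mat P d d (Nr 0) $$ (a,j) * b $ j)"
    proof (intro sum.cong refl)
      fix j assume j: "j \<in> {..<d}"
      have "(LINT \<omega>|P. cp (Suc k) \<omega> (None, a, j) * b $ j) = (LINT \<omega>|P. cp (Suc k) \<omega> (None, a, j)) * b $ j" by simp
      also have "(LINT \<omega>|P. cp (Suc k) \<omega> (None, a, j)) = (LINT \<omega>|P. cp 0 \<omega> (None, a, j))" by (rule cpmean) simp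
      also have "\<dots> = mean_mat P d d (Nr 0) $$ (a,j)" unfolding mean_mat_def using a j by (simp add: cpN)
      finally show "(LINT \<omega>|P. cp (Suc k) \<omega> (None, a, j) * b $ j) = mean_mat P d d (Nr 0) $$ (a,j) * b $ j" .
    qed
    finally show ?thesis .
  qed
  have zc: "z k \<omega> \<in> carrier_vec (p*d)" for k \<omega> unfolding zz by (rule zd_carrier)
  show ?thesis using zc zint shift rec unfolding z_def q_def by auto
qed

lemma limit_fix:
  fixes m :: "nat \<Rightarrow> nat \<Rightarrow> real" and L :: "nat \<Rightarrow> real"
  assumes p: "p \<ge> 1"
    and shift: "\<And>k r. r < (p-1)*d \<Longrightarrow> m (Suc k) r = m k (r+d)"
    and rec: "\<And>k a. a < d \<Longrightarrow> m (Suc k) ((p-1)*d + a) = (\<Sum>c<p*d. G a c * m k c) + h a"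
    and lim: "\<And>a. a < d \<Longrightarrow> (\<lambda>k. m k ((p-1)*d + a)) \<longlonglongrightarrow> L a"
    and a: "a < d"
  shows "L a = (\<Sum>c<p*d. G a c * L (c mod d)) + h a"
proof -
  have all: "(\<lambda>k. m k ((p-1-j)*d + b)) \<longlonglongrightarrow> L b" if b: "b < d" and j: "j \<le> p-1" for j b
    using j
  proof (induction j)
    case 0 then show ?case using lim[OF b] by simp
  next
    case (Suc j)
    define u where "u = p-1-Suc j"
    have u1: "Suc u = p-1-j" using Suc.prems unfolding u_def by auto
    have "u * d + b < u*d + d" using b by simp
    also have "u*d + d = Suc u * d" by simp
    also have "\<dots> \<le> (p-1)*d" using u1 by (intro mult_le_mono1) auto
    finally have r: "u*d + b < (p-1)*d" .
    have rd: "u*d + b + d = (p-1-j)*d + b" using u1[symmetric] by simp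
    have "(\<lambda>k. m (Suc k) (u*d + b)) \<longlonglongrightarrow> L b"
      using Suc.IH Suc.prems by (simp add: shift[OF r] rd)
    then show ?case unfolding u_def by (rule LIMSEQ_imp_Suc)
  qed
  have cl: "(\<lambda>k. m k c) \<longlonglongrightarrow> L (c mod d)" if c: "c < p*d" for c
  proof -
    have d: "d > 0" using c by (cases d) auto
    have cd: "c div d < p" using c by (simp add: less_mult_imp_div_less)
    have e: "p - 1 - (p - 1 - c div d) = c div d" using cd by auto
    have "(\<lambda>k. m k ((p-1-(p-1-c div d))*d + c mod d)) \<longlonglongrightarrow> L (c mod d)"
      using d by (intro all) auto
    then show ?thesis unfolding e by simp
  qed
  have "(\<lambda>k. m (Suc k) ((p-1)*d + a)) \<longlonglongrightarrow> (\<Sum>c<p*d. G a c * L (c mod d)) + h a"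
    unfolding rec[OF a] by (intro tendsto_intros cl) auto
  moreover have "(\<lambda>k. m (Suc k) ((p-1)*d + a)) \<longlonglongrightarrow> L a"
    using lim[OF a] by (rule LIMSEQ_Suc)
  ultimately show ?thesis using LIMSEQ_unique by blast
qed

lemma mean_blk: assumes "prob_space P"
  shows "mean_mat P (p*d) (p*d) (\<lambda>\<omega>. blk_companion d p (\<lambda>i. Cr i \<omega>)) = blk_companion d p (\<lambda>i. mean_mat P d d (Cr i))"
proof (rule eq_matI)
  interpret prob_space P by fact
  fix r c assume "r < dim_row (blk_companion d p (\<lambda>i. mean_mat P d d (Cr i)))"
    "c < dim_col (blk_companion d p (\<lambda>i. mean_mat P d d (Cr i)))"
  then have r: "r < p*d" and c: "c < p*d" by (auto simp: blk_companion_def)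
  have d: "d > 0" using c by (cases d) auto
  have rq: "r - (p-1)*d < d" if "\<not> r < (p-1)*d" using r that by (cases p) auto
  show "mean_mat P (p*d) (p*d) (\<lambda>\<omega>. blk_companion d p (\<lambda>i. Cr i \<omega>)) $$ (r,c) = blk_companion d p (\<lambda>i. mean_mat P d d (Cr i)) $$ (r,c)"
    using r c rq d by (auto simp: mean_mat_def blk_entry prob_space)
qed (auto simp: mean_mat_def blk_companion_def)

lemma EpT_entry: assumes z: "z \<in> carrier_vec (p*d)" and a: "a < d" and p: "p \<ge> 1"
  shows "(transpose_mat (Ep d p) *\<^sub>v z) $ a = z $ ((p-1)*d + a)"
proof -
  have r: "(p-1)*d + a < p*d" using a p by (cases p) auto
  have "(transpose_mat (Ep d p) *\<^sub>v z) $ a = (\<Sum>r<p*d. transpose_mat (Ep d p) $$ (a,r) * z $ r)"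
    by (rule mult_vec_entry[OF _ z a]) simp
  also have "\<dots> = (\<Sum>r<p*d. if r = (p-1)*d + a then z $ r else 0)"
    using a by (intro sum.cong refl) (auto simp: Ep_def)
  also have "\<dots> = z $ ((p-1)*d + a)" using r by simp
  finally show ?thesis .
qed

theorem corollary3p5:
  fixes P :: "'w measure" and d p :: nat and A :: "real mat"
    and Cr :: "nat \<Rightarrow> nat \<Rightarrow> 'w \<Rightarrow> real mat" and Nr :: "nat \<Rightarrow> 'w \<Rightarrow> real mat"
  assumes "prob_space P"
    and "sym_pos_def d A"
    and "p \<ge> 1"
    and "\<And>k i \<omega>. Cr k i \<omega> \<in> carrier_mat d d"
    and "\<And>k \<omega>. Nr k \<omega> \<in> carrier_mat d d"
    and "\<And>k i a b. i < p \<Longrightarrow> a < d \<Longrightarrow> b < d \<Longrightarrow>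
           integrable P (\<lambda>\<omega>. Cr k i \<omega> $$ (a,b))"
    and "\<And>k a b. a < d \<Longrightarrow> b < d \<Longrightarrow> integrable P (\<lambda>\<omega>. Nr k \<omega> $$ (a,b))"
    and "\<And>k. copy_data d p (Cr k) (Nr k) \<in> measurable P data_space"
    and "prob_space.indep_vars P (\<lambda>_. data_space) (\<lambda>k. copy_data d p (Cr k) (Nr k)) {1..}"
    and "\<And>k. k \<ge> 1 \<Longrightarrow> distr P data_space (copy_data d p (Cr k) (Nr k))
                        = distr P data_space (copy_data d p (Cr 0) (Nr 0))"
    and "spectral_radius (map_mat complex_of_real
           (mean_mat P (p*d) (p*d) (\<lambda>\<omega>. blk_companion d p (\<lambda>i. Cr 0 i \<omega>)))) < 1"
    and "\<forall>b \<in> carrier_vec d. \<forall>x0 \<in> carrier_vec d. \<forall>j < d.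
           (\<lambda>k. LINT \<omega>|P. (transpose_mat (Ep d p) *\<^sub>v zproc d p Cr Nr b x0 k \<omega>) $ j)
             \<longlonglongrightarrow> (- (the (mat_inverse A) *\<^sub>v b)) $ j"
    and "\<exists>Q Qi. Q \<in> carrier_mat d d \<and> Qi \<in> carrier_mat d d \<and> Q * Qi = 1\<^sub>m d \<and> Qi * Q = 1\<^sub>m d \<and>
           (\<forall>i < p. upper_triangular (Qi * mean_mat P d d (Cr 0 i) * Q))"
  shows "\<exists>s :: nat \<Rightarrow> real poly.
           (\<forall>j < d. lead_coeff (s j) = 1 \<and> degree (s j) = p) \<and>
           (\<forall>t::real. det (mean_mat P (p*d) (p*d) (\<lambda>\<omega>. blk_companion d p (\<lambda>i. Cr 0 i \<omega>))
                              - t \<cdot>\<^sub>m 1\<^sub>m (p*d))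
                     = (-1)^(p*d) * (\<Prod>j<d. poly (s j) t)) \<and>
           spectrum (map_mat complex_of_real (- (mean_mat P d d (Nr 0) * A)))
             = {complex_of_real (poly (s j) 1) | j. j < d}"
proof -
  note PS = assms(1) and p = assms(3)
  from assms(13) obtain Q Qi where Q: "Q \<in> carrier_mat d d" and Qi: "Qi \<in> carrier_mat d d"
    and QQi: "Q * Qi = 1\<^sub>m d" and QiQ: "Qi * Q = 1\<^sub>m d"
    and ut0: "\<forall>i < p. upper_triangular (Qi * mean_mat P d d (Cr 0 i) * Q)" by blast
  define Cb where "Cb = (\<lambda>i. mean_mat P d d (Cr 0 i))"
  define Nb where "Nb = mean_mat P d d (Nr 0)"
  have Cb: "\<And>i. i<p \<Longrightarrow> Cb i \<in> carrier_mat d d" by (simp add: Cb_def mean_mat_def)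
  have ut: "\<forall>i<p. upper_triangular (Qi * Cb i * Q)" using ut0 unfolding Cb_def .
  have A: "A \<in> carrier_mat d d" and pd: "\<And>v. v \<in> carrier_vec d \<Longrightarrow> v \<noteq> 0\<^sub>v d \<Longrightarrow> v \<bullet> (A *\<^sub>v v) > 0"
    using assms(2) unfolding sym_pos_def_def by auto
  have detA: "det A \<noteq> 0"
  proof
    assume "det A = 0"
    then obtain v where v: "v \<in> carrier_vec d" "v \<noteq> 0\<^sub>v d" "A *\<^sub>v v = 0\<^sub>v d"
      using det_0_iff_vec_prod_zero[OF A] by auto
    then have "v \<bullet> (A *\<^sub>v v) = 0" by simp
    with pd[OF v(1,2)] show False by simp
  qed
  obtain Ai where Ai: "mat_inverse A = Some Ai"
    using mat_inverse(1)[OF A, where b="()"] det_non_zero_imp_unit[OF A detA, where b="()"] by (cases "mat_inverse A") auto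
  have AiA: "Ai * A = 1\<^sub>m d" and Aic: "Ai \<in> carrier_mat d d" using mat_inverse(2)[OF A Ai] by auto
  have NA: "- (Nb * A) = 1\<^sub>m d - lcomb d p Cb 1"
  proof (rule eq_matI)
    show "dim_row (- (Nb * A)) = dim_row (1\<^sub>m d - lcomb d p Cb 1)"
      using A lcomb_carrier[of p Cb d 1] Cb by (simp add: Nb_def mean_mat_def)
    show "dim_col (- (Nb * A)) = dim_col (1\<^sub>m d - lcomb d p Cb 1)"
      using A lcomb_carrier[of p Cb d 1] Cb by simp
    fix a j assume "a < dim_row (1\<^sub>m d - lcomb d p Cb 1)" "j < dim_col (1\<^sub>m d - lcomb d p Cb 1)"
    then have a: "a < d" and j: "j < d" using lcomb_carrier[of p Cb d 1] Cb by auto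
    define e :: "real vec" where "e = unit_vec d j"
    have e: "e \<in> carrier_vec d" unfolding e_def by simp
    define bb where "bb = A *\<^sub>v e"
    have bb: "bb \<in> carrier_vec d" unfolding bb_def using A e by simp
    note B = partB[OF assms(1,4,5,6,7,8,9,10) bb p, where xi="0\<^sub>v d"]
    define m where "m = (\<lambda>k r. LINT \<omega>|P. zproc d p Cr Nr bb (0\<^sub>v d) k \<omega> $ r)"
    have Aie: "the (mat_inverse A) *\<^sub>v bb = e"
      unfolding Ai bb_def using Aic A e by (simp add: assoc_mult_mat_vec[symmetric] AiA)
    have lim: "(\<lambda>k. m k ((p-1)*d + a')) \<longlonglongrightarrow> - e $ a'" if a': "a' < d" for a'
    proof -
      have "(\<lambda>k. LINT \<omega>|P. (transpose_mat (Ep d p) *\<^sub>v zproc d p Cr Nr bb (0\<^sub>v d) k \<omega>) $ a')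
             \<longlonglongrightarrow> (- (the (mat_inverse A) *\<^sub>v bb)) $ a'"
        using assms(12) bb a' by auto
      moreover have "(- (the (mat_inverse A) *\<^sub>v bb)) $ a' = - e $ a'" unfolding Aie using e a' by simp
      moreover have "(\<lambda>k. LINT \<omega>|P. (transpose_mat (Ep d p) *\<^sub>v zproc d p Cr Nr bb (0\<^sub>v d) k \<omega>) $ a')
          = (\<lambda>k. m k ((p-1)*d + a'))"
        unfolding m_def using B a' p by (simp add: EpT_entry)
      ultimately show ?thesis by simp
    qed
    have key: "- e $ a = (\<Sum>c<p*d. Cb (c div d) $$ (a, c mod d) * (- e $ (c mod d))) + (\<Sum>j<d. Nb $$ (a,j) * bb $ j)"
      by (rule limit_fix[OF p, where m = m]) (use B lim a in \<open>auto simp: m_def Cb_def Nb_def\<close>)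
    have ea: "e $ a = (if a = j then 1 else 0)" unfolding e_def using a j by simp
    have s1: "(\<Sum>c<p*d. Cb (c div d) $$ (a, c mod d) * (- e $ (c mod d))) = - (\<Sum>i<p. Cb i $$ (a,j))"
    proof -
      have "(\<Sum>c<p*d. Cb (c div d) $$ (a, c mod d) * (- e $ (c mod d))) = (\<Sum>i<p. \<Sum>b<d. Cb i $$ (a, b) * (- e $ b))"
        unfolding sum_pd by (intro sum.cong refl) auto
      also have "\<dots> = (\<Sum>i<p. - Cb i $$ (a, j))"
      proof (intro sum.cong refl)
        fix i
        have "(\<Sum>b<d. Cb i $$ (a, b) * (- e $ b)) = (\<Sum>b<d. if b = j then - Cb i $$ (a, j) else 0)"
          unfolding e_def using j by (intro sum.cong refl) auto
        then show "(\<Sum>b<d. Cb i $$ (a, b) * (- e $ b)) = - Cb i $$ (a, j)" using j by simp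
      qed
      finally show ?thesis by (simp add: sum_negf)
    qed
    have Nbc: "Nb \<in> carrier_mat d d" unfolding Nb_def mean_mat_def by simp
    have s2: "(\<Sum>j<d. Nb $$ (a,j) * bb $ j) = (Nb * A) $$ (a,j)"
    proof -
      have "(\<Sum>j<d. Nb $$ (a,j) * bb $ j) = (Nb *\<^sub>v bb) $ a" using mult_vec_entry[OF Nbc bb a] by simp
      also have "Nb *\<^sub>v bb = (Nb * A) *\<^sub>v e" unfolding bb_def using Nbc A e by (simp add: assoc_mult_mat_vec)
      also have "((Nb * A) *\<^sub>v e) $ a = (\<Sum>k<d. (Nb * A) $$ (a,k) * e $ k)"
        using Nbc A e a by (intro mult_vec_entry) auto
      also have "\<dots> = (\<Sum>k<d. if k = j then (Nb * A) $$ (a,j) else 0)"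
        unfolding e_def using j by (intro sum.cong refl) auto
      also have "\<dots> = (Nb * A) $$ (a,j)" using j by simp
      finally show ?thesis .
    qed
    have "(1\<^sub>m d - lcomb d p Cb 1) $$ (a,j) = (if a = j then 1 else 0) - (\<Sum>i<p. Cb i $$ (a,j))"
      using a j lcomb_carrier[of p Cb d 1] Cb by (simp add: lcomb_entry)
    also have "\<dots> = - ((Nb * A) $$ (a,j))" using key ea s1 s2 by simp
    also have "\<dots> = (- (Nb * A)) $$ (a,j)" using a j Nbc A by simp
    finally show "(- (Nb * A)) $$ (a,j) = (1\<^sub>m d - lcomb d p Cb 1) $$ (a,j)" by simp
  qed
  have main: "\<exists>s :: nat \<Rightarrow> real poly.
           (\<forall>j < d. lead_coeff (s j) = 1 \<and> degree (s j) = p) \<and>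
           (\<forall>t::real. det (blk_companion d p Cb - t \<cdot>\<^sub>m 1\<^sub>m (p*d))
                     = (-1)^(p*d) * (\<Prod>j<d. poly (s j) t)) \<and>
           spectrum (map_mat complex_of_real (- (Nb * A)))
             = {complex_of_real (poly (s j) 1) | j. j < d}"
    by (rule partA[OF Cb p Q Qi QQi QiQ ut NA])
  show ?thesis using main unfolding mean_blk[OF PS] Cb_def Nb_def .
qed

end
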